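(* Let $\mathcal{P}=\{\alpha_i\}_{i=1}^{3g-3+n}$ be a pants decomposition of $S_{g,n}$ with Fenchel–Nielsen coordinates $(\ell_i,\tau_i)_{i=1}^{3g-3+n}$. Let $\mathcal{F}:\mathcal{T}_{g,n}\to\mathbb{R}_+$ be a function. Then $\mathcal{F}$ is bounding with respect to these Fenchel–Nielsen coordinates if and only if, for every $Y\in\mathcal{T}_{g,n}$ and every $i$, \[ \sup_{Z\in\mathrm{Mod}_{g,n}\cdot Y}\left\{\frac{\ell_i(Z)+|\tau_i(Z)|}{\mathcal{F}(Z)}\right\}<+\infty . \]
   Context: $\mathcal{T}_{g,n}$ is the Teichmüller space of $S_{g,n}$, an oriented surface of genus $g$ with $n>0$ punctures and $2g-2+n>0$. $\mathrm{Mod}_{g,n}$ is its mapping class group, acting by change of marking. $\ell_i$ is the hyperbolic length of $\alpha_i$ and $\tau_i$ is the Fenchel–Nielsen twist parameter along $\alpha_i$ (measured in length). For $\mathbf m=(m_1,\dots,m_{3g-3+n})\in\mathbb{Z}^{3g-3+n}$ let \[ \mathcal{C}^{\mathbf m}_{\mathcal P}=\{Y\in\mathcal{T}_{g,n}: m_i\ell_i(Y)\le\tau_i(Y)\le(m_i+1)\ell_i(Y)\ \text{for all } i\}. \] $\mathcal{F}$ is called bounding with respect to $(\ell_i,\tau_i)$ if for every $Y\in\mathcal{T}_{g,n}$ there is a constant $C>0$ with the following property: for every $L>0$, every $\mathbf m$, every $Z\in\mathrm{Mod}_{g,n}\cdot Y\cap\mathcal{C}^{\mathbf m}_{\mathcal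 P}\cap\mathcal{F}^{-1}([0,L])$ and every $i$, \[ \ell_i(Z)\le C\cdot\frac{L}{\max\{|m_i|,|m_i+1|\}}. \] *)

theory Defs
  imports Complex_Main "HOL-Library.FuncSet"
begin

text \<open>Abstract model of Teichmueller space 'T with Fenchel-Nielsen coordinate functions
  len i (hyperbolic length of alpha_i) and tw i (twist along alpha_i), i < N = 3g-3+n,
  and the mapping class group 'm acting by act.\<close>

definition orbit :: "('m \<Rightarrow> 'T \<Rightarrow> 'T) \<Rightarrow> 'T \<Rightarrow> 'T set" where
  "orbit act Y = range (\<lambda>\<phi>. act \<phi> Y)"

definition FN_cell :: "nat \<Rightarrow> (nat \<Rightarrow> 'T \<Rightarrow> real) \<Rightarrow> (nat \<Rightarrow> 'T \<Rightarrow> real) \<Rightarrow> (nat \<Rightarrow> int) \<Rightarrow> 'T set" where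
  "FN_cell N len tw m =
     {Y. \<forall>i<N. of_int (m i) * len i Y \<le> tw i Y \<and> tw i Y \<le> (of_int (m i) + 1) * len i Y}"

definition bounding ::
  "nat \<Rightarrow> (nat \<Rightarrow> 'T \<Rightarrow> real) \<Rightarrow> (nat \<Rightarrow> 'T \<Rightarrow> real) \<Rightarrow> ('m \<Rightarrow> 'T \<Rightarrow> 'T) \<Rightarrow> ('T \<Rightarrow> real) \<Rightarrow> bool" where
  "bounding N len tw act F \<longleftrightarrow>
     (\<forall>Y. \<exists>C>0. \<forall>L>0. \<forall>m. \<forall>Z \<in> orbit act Y \<inter> FN_cell N len tw m \<inter> F -` {0..L}.
        \<forall>i<N. len i Z \<le> C * L / of_int (max \<bar>m i\<bar> \<bar>m i + 1\<bar>))"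

end

theory Submission
  imports Defs
begin

lemma cell_upper:
  fixes l t :: real and m :: int
  assumes "l > 0" "of_int m * l \<le> t" "t \<le> (of_int m + 1) * l"
  shows "of_int (max \<bar>m\<bar> \<bar>m + 1\<bar>) * l \<le> l + \<bar>t\<bar>"
proof (cases "m \<ge> 0")
  case True
  then have "max \<bar>m\<bar> \<bar>m + 1\<bar> = m + 1" by simp
  moreover have "t \<ge> 0" using assms True by (meson mult_nonneg_nonneg of_int_0_le_iff less_imp_le order_trans)
  ultimately show ?thesis using assms by (simp add: algebra_simps)
next
  case False
  then have "max \<bar>m\<bar> \<bar>m + 1\<bar> = - m" by simp
  moreover have "(of_int m + 1) * l \<le> 0" using False assms
    by (simp add: mult_nonpos_nonneg)
  ultimately show ?thesis using assms by (simp add: algebra_simps)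
qed

lemma cell_lower:
  fixes l t :: real and m :: int
  assumes "l > 0" "of_int m * l \<le> t" "t \<le> (of_int m + 1) * l"
  shows "\<bar>t\<bar> \<le> of_int (max \<bar>m\<bar> \<bar>m + 1\<bar>) * l" and "(1::real) \<le> of_int (max \<bar>m\<bar> \<bar>m + 1\<bar>)"
proof -
  have "1 \<le> max \<bar>m\<bar> \<bar>m + 1\<bar>" by linarith
  then show "(1::real) \<le> of_int (max \<bar>m\<bar> \<bar>m + 1\<bar>)" by (metis of_int_1_le_iff)
  show "\<bar>t\<bar> \<le> of_int (max \<bar>m\<bar> \<bar>m + 1\<bar>) * l"
  proof (cases "m \<ge> 0")
    case True
    then have "max \<bar>m\<bar> \<bar>m + 1\<bar> = m + 1" by simp
    moreover have "t \<ge> 0" using assms True by (meson mult_nonneg_nonneg of_int_0_le_iff less_imp_le order_trans)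
    ultimately show ?thesis using assms by (simp add: algebra_simps)
  next
    case False
    then have "max \<bar>m\<bar> \<bar>m + 1\<bar> = - m" by simp
    moreover have "(of_int m + 1) * l \<le> 0" using False assms
      by (simp add: mult_nonpos_nonneg)
    ultimately show ?thesis using assms by (simp add: algebra_simps)
  qed
qed

theorem proposition4p2:
  fixes g n N :: nat
    and len tw :: "nat \<Rightarrow> 'T \<Rightarrow> real"
    and act :: "'m::group_add \<Rightarrow> 'T \<Rightarrow> 'T"
    and F :: "'T \<Rightarrow> real"
  assumes "n > 0" and "2 * g + n > 2"
    and "N = 3 * g + n - 3"
    and FN_bij: "bij_betw (\<lambda>Y. (\<lambda>i\<in>{..<N}. (len i Y, tw i Y))) UNIV
                   ({..<N} \<rightarrow>\<^sub>E ({0<..} \<times> UNIV))"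
    and act_id: "\<And>Y. act 0 Y = Y"
    and act_comp: "\<And>a b Y. act (a + b) Y = act a (act b Y)"
    and F_pos: "\<And>Y. F Y > 0"
  shows "bounding N len tw act F \<longleftrightarrow>
         (\<forall>Y. \<forall>i<N. bdd_above ((\<lambda>Z. (len i Z + \<bar>tw i Z\<bar>) / F Z) ` orbit act Y))"
proof -
  have lpos: "len i Z > 0" if "i < N" for i Z
  proof -
    have "(\<lambda>i\<in>{..<N}. (len i Z, tw i Z)) \<in> {..<N} \<rightarrow>\<^sub>E ({0<..} \<times> UNIV)"
      using FN_bij bij_betwE by blast
    then show ?thesis using that by (auto simp: PiE_def Pi_def)
  qed
  show ?thesis
  proof
    assume B: "bounding N len tw act F"
    show "\<forall>Y. \<forall>i<N. bdd_above ((\<lambda>Z. (len i Z + \<bar>tw i Z\<bar>) / F Z) ` orbit act Y)"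
    proof (intro allI impI)
      fix Y i assume i: "i < N"
      from B obtain C where C: "C > 0" and HC: "\<forall>L>0. \<forall>m. \<forall>Z \<in> orbit act Y \<inter> FN_cell N len tw m \<inter> F -` {0..L}.
        \<forall>i<N. len i Z \<le> C * L / of_int (max \<bar>m i\<bar> \<bar>m i + 1\<bar>)"
        unfolding bounding_def by blast
      show "bdd_above ((\<lambda>Z. (len i Z + \<bar>tw i Z\<bar>) / F Z) ` orbit act Y)"
      proof (rule bdd_aboveI2)
        fix Z assume Z: "Z \<in> orbit act Y"
        define m where "m = (\<lambda>j. \<lfloor>tw j Z / len j Z\<rfloor>)"
        have cell: "of_int (m j) * len j Z \<le> tw j Z \<and> tw j Z \<le> (of_int (m j) + 1) * len j Z" if "j < N" for j
        proof -
          have lp: "len j Z > 0" using lpos that by blast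
          have a: "of_int (m j) \<le> tw j Z / len j Z" "tw j Z / len j Z \<le> of_int (m j) + 1"
            unfolding m_def by linarith+
          show ?thesis using a lp by (simp add: pos_le_divide_eq pos_divide_le_eq)
        qed
        then have "Z \<in> FN_cell N len tw m" by (simp add: FN_cell_def)
        moreover have "Z \<in> F -` {0..F Z}" using F_pos[of Z] by simp
        ultimately have "len i Z \<le> C * F Z / of_int (max \<bar>m i\<bar> \<bar>m i + 1\<bar>)"
          using HC F_pos[of Z] Z i by blast
        moreover note lw = cell_lower[OF lpos[OF i] conjunct1[OF cell[OF i]] conjunct2[OF cell[OF i]]]
        ultimately have "of_int (max \<bar>m i\<bar> \<bar>m i + 1\<bar>) * len i Z \<le> C * F Z"
          by (simp add: pos_le_divide_eq mult.commute)
        moreover have "len i Z \<le> of_int (max \<bar>m i\<bar> \<bar>m i + 1\<bar>) * len i Z"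
          using lw(2) lpos[OF i] by simp
        ultimately have "len i Z + \<bar>tw i Z\<bar> \<le> (2 * C) * F Z" using lw(1) by linarith
        then show "(len i Z + \<bar>tw i Z\<bar>) / F Z \<le> 2 * C"
          using F_pos[of Z] by (simp add: pos_divide_le_eq)
      qed
    qed
  next
    assume A: "\<forall>Y. \<forall>i<N. bdd_above ((\<lambda>Z. (len i Z + \<bar>tw i Z\<bar>) / F Z) ` orbit act Y)"
    show "bounding N len tw act F"
      unfolding bounding_def
    proof
      fix Y
      have "\<forall>i. \<exists>b. i < N \<longrightarrow> (\<forall>Z\<in>orbit act Y. (len i Z + \<bar>tw i Z\<bar>) / F Z \<le> b)"
        using A by (meson bdd_above_def imageI)
      then obtain b where b: "\<And>i Z. i < N \<Longrightarrow> Z \<in> orbit act Y \<Longrightarrow> (len i Z + \<bar>tw i Z\<bar>) / F Z \<le> b i"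
        by metis
      define C where "C = 1 + (\<Sum>i<N. \<bar>b i\<bar>)"
      have Cge: "\<bar>b i\<bar> \<le> C" if "i < N" for i
      proof -
        have "\<bar>b i\<bar> \<le> (\<Sum>i<N. \<bar>b i\<bar>)"
          using that by (intro member_le_sum) auto
        then show ?thesis unfolding C_def by simp
      qed
      have Cpos: "C > 0" unfolding C_def by (simp add: sum_nonneg add_pos_nonneg)
      show "\<exists>C>0. \<forall>L>0. \<forall>m. \<forall>Z \<in> orbit act Y \<inter> FN_cell N len tw m \<inter> F -` {0..L}.
        \<forall>i<N. len i Z \<le> C * L / of_int (max \<bar>m i\<bar> \<bar>m i + 1\<bar>)"
      proof (intro exI[of _ C] conjI allI impI ballI Cpos)
        fix L :: real and m Z i
        assume L: "L > 0" and Z: "Z \<in> orbit act Y \<inter> FN_cell N len tw m \<inter> F -` {0..L}" and i: "i < N"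
        have FL: "F Z \<le> L" using Z by simp
        have cl: "of_int (m i) * len i Z \<le> tw i Z" "tw i Z \<le> (of_int (m i) + 1) * len i Z"
          using Z i by (auto simp: FN_cell_def)
        have up: "of_int (max \<bar>m i\<bar> \<bar>m i + 1\<bar>) * len i Z \<le> len i Z + \<bar>tw i Z\<bar>"
          using cell_upper[OF lpos[OF i] cl] .
        have "(len i Z + \<bar>tw i Z\<bar>) / F Z \<le> C"
          using b[OF i] Z Cge[OF i] by fastforce
        then have "len i Z + \<bar>tw i Z\<bar> \<le> C * F Z" using F_pos[of Z] by (simp add: pos_divide_le_eq)
        also have "\<dots> \<le> C * L" using FL Cpos by simp
        finally have "of_int (max \<bar>m i\<bar> \<bar>m i + 1\<bar>) * len i Z \<le> C * L" using up by linarith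
        moreover have "(0::real) < of_int (max \<bar>m i\<bar> \<bar>m i + 1\<bar>)"
          using cell_lower(2)[OF lpos[OF i] cl] by linarith
        ultimately show "len i Z \<le> C * L / of_int (max \<bar>m i\<bar> \<bar>m i + 1\<bar>)"
          by (simp add: pos_le_divide_eq mult.commute)
      qed
    qed
  qed
qed

end
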